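(* Let $\upsilon$ be a positive integer, $n$ a nonnegative integer, and $p,q$ real parameters with $q>-1$. Then $y=M_n(p,q,\upsilon;x)$ satisfies $$\Big[xD\,(xD+q+1-\upsilon)_{\upsilon}-(-x)^{\upsilon}(xD-\upsilon n)(xD+n+1-p)_{\upsilon}\Big]y=0,$$ where $D=\frac{d}{dx}$ and, for an operator $T$ and constant $c$, $(T+c)_{\upsilon}=\prod_{k=0}^{\upsilon-1}(T+c+k)$.
   Context: $(a)_k=a(a+1)\cdots(a+k-1)$, $(a)_0=1$, denotes the Pochhammer symbol. For a positive integer $\upsilon$, a nonnegative integer $n$ and real parameters $p,q$ define $$M_n(p,q,\upsilon;x)=(-1)^n(q+1)_{\upsilon n}\sum_{j=0}^{n}(-1)^j\binom{n}{j}\frac{(n+1-p)_{\upsilon j}}{(q+1)_{\upsilon j}}(-x)^{\upsilon j}.$$ *)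

theory Defs
  imports "HOL-Analysis.Analysis"
begin

definition M :: "nat \<Rightarrow> real \<Rightarrow> real \<Rightarrow> nat \<Rightarrow> real \<Rightarrow> real" where
  "M n p q v x = (-1) ^ n * pochhammer (q + 1) (v * n) *
     (\<Sum>j = 0..n. (-1) ^ j * real (n choose j) *
        (pochhammer (real n + 1 - p) (v * j) / pochhammer (q + 1) (v * j)) * (- x) ^ (v * j))"

definition theta :: "(real \<Rightarrow> real) \<Rightarrow> real \<Rightarrow> real" where
  "theta f = (\<lambda>x. x * deriv f x)"

text \<open>Operator Pochhammer symbol (theta + c)_k = prod_{i<k} (theta + c + i);
  the factors commute, we apply them in the order i = 0, 1, ..., k-1.\<close>
fun theta_poch :: "real \<Rightarrow> nat \<Rightarrow> (real \<Rightarrow> real) \<Rightarrow> real \<Rightarrow> real" where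
  "theta_poch c 0 f = f"
| "theta_poch c (Suc k) f =
     (let g = theta_poch c k f in (\<lambda>x. theta g x + (c + real k) * g x))"

end

theory Submission
  imports Defs
begin

lemma theta_sum:
  assumes "finite A"
  shows "theta (\<lambda>x. \<Sum>j\<in>A. c j * x ^ e j) = (\<lambda>x. \<Sum>j\<in>A. c j * real (e j) * x ^ e j)"
proof
  fix x :: real
  have "((\<lambda>x. \<Sum>j\<in>A. c j * x ^ e j) has_field_derivative (\<Sum>j\<in>A. c j * (real (e j) * x ^ (e j - 1)))) (at x)"
    by (rule DERIV_sum) (auto intro!: derivative_eq_intros)
  then have "deriv (\<lambda>x. \<Sum>j\<in>A. c j * x ^ e j) x = (\<Sum>j\<in>A. c j * (real (e j) * x ^ (e j - 1)))"
    by (rule DERIV_imp_deriv)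
  moreover have xe: "x * c j * (real (e j) * x ^ (e j - 1)) = c j * real (e j) * x ^ e j" for j
    by (cases "e j") (auto simp: algebra_simps)
  ultimately have "theta (\<lambda>x. \<Sum>j\<in>A. c j * x ^ e j) x = (\<Sum>j\<in>A. x * c j * (real (e j) * x ^ (e j - 1)))"
    unfolding theta_def by (simp only: sum_distrib_left mult.assoc)
  also have "\<dots> = (\<Sum>j\<in>A. c j * real (e j) * x ^ e j)"
    by (rule sum.cong) (use xe in auto)
  finally show "theta (\<lambda>x. \<Sum>j\<in>A. c j * x ^ e j) x = (\<Sum>j\<in>A. c j * real (e j) * x ^ e j)" .
qed

lemma theta_poch_sum:
  assumes "finite A"
  shows "theta_poch c k (\<lambda>x. \<Sum>j\<in>A. a j * x ^ e j) = (\<lambda>x. \<Sum>j\<in>A. (a j * pochhammer (c + real (e j)) k) * x ^ e j)"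
proof (induction k)
  case 0
  then show ?case by simp
next
  case (Suc k)
  have t: "theta (\<lambda>x. \<Sum>j\<in>A. (a j * pochhammer (c + real (e j)) k) * x ^ e j)
     = (\<lambda>x. \<Sum>j\<in>A. (a j * pochhammer (c + real (e j)) k) * real (e j) * x ^ e j)"
    by (rule theta_sum[OF assms])
  show ?case
    by (simp only: theta_poch.simps Let_def Suc t)
       (simp add: sum_distrib_left sum.distrib[symmetric] pochhammer_Suc algebra_simps)
qed

lemma binom_shift: "real (n choose Suc j) * real (Suc j) = real (n choose j) * (real n - real j)"
  if "j < n" for n j :: nat
proof -
  have "Suc j * (n choose Suc j) = (n - j) * (n choose j)"
    by (metis binomial_absorb_comp binomial_absorption)
  then have "real (Suc j * (n choose Suc j)) = real ((n - j) * (n choose j))" by simp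
  then show ?thesis using that by (simp add: of_nat_diff algebra_simps)
qed

lemma key_alg:
  fixes K C0 C1 Pn R D E s t vr jr nr :: real
  assumes "D \<noteq> 0" "E \<noteq> 0" "C1 * (jr + 1) = C0 * (nr - jr)"
  shows "K * (- s * C1 * (Pn * R / (D * E)) * (t * w)) * E * (vr * (jr + 1))
       = w * (K * (s * C0 * (Pn / D) * t) * R) * (vr * jr - vr * nr)"
proof -
  have "K * (- s * C1 * (Pn * R / (D * E)) * (t * w)) * E * (vr * (jr + 1))
      = - K * s * (C1 * (jr + 1)) * Pn * R * t * w * vr / D"
    using assms by (simp add: field_simps)
  also have "\<dots> = - K * s * (C0 * (nr - jr)) * Pn * R * t * w * vr / D"
    using assms by simp
  also have "\<dots> = w * (K * (s * C0 * (Pn / D) * t) * R) * (vr * jr - vr * nr)"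
    using assms by (simp add: field_simps)
  finally show ?thesis .
qed

theorem mainTheorem6:
  fixes v n :: nat and p q :: real
  assumes "v > 0" and "q > -1"
  shows "\<forall>x. theta (theta_poch (q + 1 - real v) v (M n p q v)) x
           - (- x) ^ v * (theta (theta_poch (real n + 1 - p) v (M n p q v)) x
                          - real (v * n) * theta_poch (real n + 1 - p) v (M n p q v) x) = 0"
proof
  fix x :: real
  define N where "N = real n + 1 - p"
  define Q where "Q = q + 1"
  have Qpos: "Q > 0" using assms by (simp add: Q_def)
  define K where "K = (-1::real) ^ n * pochhammer (q + 1) (v * n)"
  define a where "a j = K * ((-1) ^ j * real (n choose j) *
        (pochhammer N (v * j) / pochhammer Q (v * j)) * (-1) ^ (v * j))" for j
  define R where "R j = pochhammer (N + real (v * j)) v" for j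
  define P where "P j = pochhammer (q + 1 - real v + real (v * j)) v" for j
  have hM: "M n p q v = (\<lambda>x. \<Sum>j\<in>{..<Suc n}. a j * x ^ (v * j))"
  proof
    fix x
    have e: "{0..n} = {..<Suc n}" by auto
    show "M n p q v x = (\<Sum>j\<in>{..<Suc n}. a j * x ^ (v * j))"
      unfolding M_def a_def K_def N_def Q_def e sum_distrib_left
      by (rule sum.cong) (auto simp: power_minus[of x] mult.assoc)
  qed
  have key: "a (Suc j) * P (Suc j) * real (v * Suc j) = (-1) ^ v * (a j * R j) * (real (v * j) - real (v * n))"
    if "j < n" for j
  proof -
    have vs: "v * Suc j = v * j + v" by simp
    have p1: "pochhammer N (v * Suc j) = pochhammer N (v * j) * R j"
      unfolding vs R_def by (simp add: pochhammer_product')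
    have p2: "pochhammer Q (v * Suc j) = pochhammer Q (v * j) * P (Suc j)"
    proof -
      have "pochhammer Q (v * j + v) = pochhammer Q (v * j) * pochhammer (Q + of_nat (v * j)) v"
        by (rule pochhammer_product')
      moreover have "Q + of_nat (v * j) = q + 1 - real v + real (v * Suc j)"
        unfolding Q_def by simp
      ultimately show ?thesis unfolding vs P_def by metis
    qed
    have D: "pochhammer Q (v * j) \<noteq> 0" using pochhammer_pos[OF Qpos] by (metis less_irrefl)
    have E: "P (Suc j) \<noteq> 0"
    proof -
      have "real v * real j \<ge> 0" by simp
      moreover have "q + 1 - real v + real (v * Suc j) = q + 1 + real v * real j" by simp
      ultimately have "q + 1 - real v + real (v * Suc j) > 0" using assms by linarith
      then show ?thesis unfolding P_def using pochhammer_pos by (metis less_irrefl)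
    qed
    have b: "real (n choose Suc j) * (real j + 1) = real (n choose j) * (real n - real j)"
      using binom_shift[OF that] by (simp add: add.commute)
    have sg: "(-1::real) ^ Suc j = - ((-1) ^ j)" by simp
    have sv: "(-1::real) ^ (v * Suc j) = (-1) ^ (v * j) * (-1) ^ v"
      by (simp add: vs power_add)
    have rv: "real (v * Suc j) = real v * (real j + 1)" "real (v * j) = real v * real j"
      "real (v * n) = real v * real n" by (simp_all add: algebra_simps)
    show ?thesis
      unfolding a_def p1 p2 sg sv rv
      by (rule key_alg[OF D E b])
  qed
  show "theta (theta_poch (q + 1 - real v) v (M n p q v)) x
           - (- x) ^ v * (theta (theta_poch (real n + 1 - p) v (M n p q v)) x
                          - real (v * n) * theta_poch (real n + 1 - p) v (M n p q v) x) = 0"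
  proof -
    have S1: "theta (theta_poch (q + 1 - real v) v (M n p q v)) x
        = (\<Sum>j<n. a (Suc j) * P (Suc j) * real (v * Suc j) * x ^ (v * Suc j))"
    proof -
      have "theta (theta_poch (q + 1 - real v) v (M n p q v)) x
        = (\<Sum>j<Suc n. a j * P j * real (v * j) * x ^ (v * j))"
        unfolding hM theta_poch_sum[OF finite_lessThan] theta_sum[OF finite_lessThan] P_def
        by (simp only:)
      also have "\<dots> = (\<Sum>j<n. a (Suc j) * P (Suc j) * real (v * Suc j) * x ^ (v * Suc j))"
        by (subst sum.lessThan_Suc_shift) simp
      finally show ?thesis .
    qed
    have S2: "theta (theta_poch (real n + 1 - p) v (M n p q v)) x
                          - real (v * n) * theta_poch (real n + 1 - p) v (M n p q v) x
        = (\<Sum>j<n. (a j * R j) * (real (v * j) - real (v * n)) * x ^ (v * j))"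
      unfolding hM theta_poch_sum[OF finite_lessThan] theta_sum[OF finite_lessThan]
      by (simp add: sum.lessThan_Suc R_def N_def sum_distrib_left sum_subtractf[symmetric] algebra_simps)
    have "(- x) ^ v * (\<Sum>j<n. (a j * R j) * (real (v * j) - real (v * n)) * x ^ (v * j))
        = (\<Sum>j<n. a (Suc j) * P (Suc j) * real (v * Suc j) * x ^ (v * Suc j))"
      unfolding sum_distrib_left
    proof (rule sum.cong)
      fix j assume "j \<in> {..<n}"
      then have "j < n" by simp
      show "(- x) ^ v * (a j * R j * (real (v * j) - real (v * n)) * x ^ (v * j))
          = a (Suc j) * P (Suc j) * real (v * Suc j) * x ^ (v * Suc j)"
        unfolding key[OF \<open>j < n\<close>] by (simp add: power_minus[of x] power_add algebra_simps)
    qed simp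
    then show ?thesis unfolding S1 S2 by simp
  qed
qed

end
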